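(* Let $n\ge 2$, $q>0$, and let $A\in M_n(\mathbb{C})$ satisfy $\operatorname{tr}A=0$ and $\operatorname{rank}A=1$. Then for all $B\in M_n(\mathbb{C})$, $$\|AB-qBA\|_F^2\le (1+q^2)\,\|A\|_F^2\,\|B\|_F^2 .$$
   Context: $\|X\|_F=\sqrt{\operatorname{tr}(XX^\dagger)}$ denotes the Frobenius norm. *)

theory Defs
  imports "HOL-Analysis.Analysis"
begin

definition conj_transpose :: "complex^'n^'m \<Rightarrow> complex^'m^'n" where
  "conj_transpose X = transpose (map_matrix cnj X)"

text \<open>Frobenius norm: sqrt of tr(X X^dagger) (which is a nonnegative real).\<close>
definition frob_norm :: "complex^'n^'n \<Rightarrow> real" where
  "frob_norm X = sqrt (Re (trace (X ** conj_transpose X)))"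

end

theory Submission
  imports Defs
begin

definition ip :: "('n::finite \<Rightarrow> complex) \<Rightarrow> ('n \<Rightarrow> complex) \<Rightarrow> complex" where
  "ip f g = (\<Sum>j\<in>UNIV. f j * cnj (g j))"

lemma ip_add_left: "ip (\<lambda>j. f j + g j) h = ip f h + ip g h"
  by (simp add: ip_def distrib_right sum.distrib)
lemma ip_diff_left: "ip (\<lambda>j. f j - g j) h = ip f h - ip g h"
  by (simp add: ip_def left_diff_distrib sum_subtractf)
lemma ip_scale_left: "ip (\<lambda>j. a * f j) h = a * ip f h"
  by (simp add: ip_def sum_distrib_left mult.assoc)
lemma ip_conj: "ip g f = cnj (ip f g)"
  by (simp add: ip_def mult.commute)
lemma ip_self_real: "ip f f = complex_of_real (\<Sum>j\<in>UNIV. (cmod (f j))^2)"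
  by (simp add: ip_def complex_norm_square[symmetric] of_real_sum)
lemma ip_self_nonneg: "0 \<le> (\<Sum>j\<in>UNIV. (cmod (f j))^2)"
  by (simp add: sum_nonneg)
lemma ip_self_zero: fixes f :: "'n::finite \<Rightarrow> complex" shows "(\<Sum>j\<in>UNIV. (cmod (f j))^2) = 0 \<Longrightarrow> f j = 0"
  by (subst (asm) sum_nonneg_eq_0_iff) auto

lemma frob_sq: "(frob_norm X)^2 = (\<Sum>i\<in>UNIV. \<Sum>j\<in>UNIV. (cmod (X$i$j))^2)"
proof -
  have "trace (X ** conj_transpose X) = (\<Sum>i\<in>UNIV. \<Sum>j\<in>UNIV. X$i$j * cnj (X$i$j))"
    by (simp add: trace_def matrix_matrix_mult_def conj_transpose_def transpose_def map_matrix_def)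
  also have "\<dots> = complex_of_real (\<Sum>i\<in>UNIV. \<Sum>j\<in>UNIV. (cmod (X$i$j))^2)"
    by (simp add: complex_norm_square[symmetric] of_real_sum)
  finally show ?thesis unfolding frob_norm_def
    by (simp add: sum_nonneg)
qed
definition nr :: "('n::finite \<Rightarrow> complex) \<Rightarrow> real" where
  "nr f = (\<Sum>j\<in>UNIV. (cmod (f j))^2)"

lemma ip_diff_right: "ip h (\<lambda>j. f j - g j) = ip h f - ip h g"
  by (simp add: ip_def right_diff_distrib sum_subtractf)
lemma ip_scale_right: "ip h (\<lambda>j. a * f j) = cnj a * ip h f"
  by (simp add: ip_def sum_distrib_left mult.assoc mult.left_commute)
lemma ip_nr: "ip f f = complex_of_real (nr f)"
  by (simp add: ip_self_real nr_def)
lemma nr_nonneg: "0 \<le> nr f" by (simp add: nr_def sum_nonneg)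

lemma bessel_raw:
  fixes r u w :: "'n::finite \<Rightarrow> complex"
  assumes uw: "ip u w = 0"
  shows "nr u * nr w * (nr u * nr w * nr r - nr w * (cmod (ip r u))^2 - nr u * (cmod (ip r w))^2) \<ge> 0"
proof -
  define U where "U = nr u"
  define W where "W = nr w"
  define R where "R = nr r"
  define \<alpha> where "\<alpha> = ip r u"
  define \<gamma> where "\<gamma> = ip r w"
  define z where "z = (\<lambda>j. complex_of_real (U*W) * r j - complex_of_real W * \<alpha> * u j - complex_of_real U * \<gamma> * w j)"
  have ha: "\<And>x. \<alpha> * (cnj \<alpha> * x) = of_real (cmod \<alpha>) * (of_real (cmod \<alpha>) * x)"
    by (metis complex_norm_square mult.assoc of_real_mult power2_eq_square)
  have hg: "\<And>x. \<gamma> * (cnj \<gamma> * x) = of_real (cmod \<gamma>) * (of_real (cmod \<gamma>) * x)"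
    by (metis complex_norm_square mult.assoc of_real_mult power2_eq_square)
  have wu: "ip w u = 0" using uw by (simp add: ip_conj[of w u])
  have ur: "ip u r = cnj \<alpha>" by (simp add: \<alpha>_def ip_conj[of u r])
  have wr: "ip w r = cnj \<gamma>" by (simp add: \<gamma>_def ip_conj[of w r])
  have "ip z z = of_real (U*W) * of_real (U*W) * ip r r - of_real (U*W) * cnj (of_real W * \<alpha>) * ip r u
     - of_real (U*W) * cnj (of_real U * \<gamma>) * ip r w
     - of_real W * \<alpha> * of_real (U*W) * ip u r + of_real W * \<alpha> * cnj (of_real W * \<alpha>) * ip u u
     + of_real W * \<alpha> * cnj (of_real U * \<gamma>) * ip u w
     - of_real U * \<gamma> * of_real (U*W) * ip w r + of_real U * \<gamma> * cnj (of_real W * \<alpha>) * ip w u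
     + of_real U * \<gamma> * cnj (of_real U * \<gamma>) * ip w w"
    unfolding z_def ip_diff_left ip_diff_right ip_scale_left ip_scale_right
    by (simp add: algebra_simps del: of_real_mult)
  also have "\<dots> = of_real (U*W*(U*W*R - W*(cmod \<alpha>)^2 - U*(cmod \<gamma>)^2))"
    using uw wu ur wr
    by (simp add: ha hg ip_nr U_def[symmetric] W_def[symmetric] R_def[symmetric] \<alpha>_def[symmetric] \<gamma>_def[symmetric]
       complex_norm_square algebra_simps power2_eq_square)
  finally have "of_real (nr z) = (of_real (U*W*(U*W*R - W*(cmod \<alpha>)^2 - U*(cmod \<gamma>)^2)) :: complex)"
    by (simp add: ip_nr)
  hence "nr z = U*W*(U*W*R - W*(cmod \<alpha>)^2 - U*(cmod \<gamma>)^2)" using of_real_eq_iff by blast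
  thus ?thesis using nr_nonneg[of z] by (simp add: U_def W_def R_def \<alpha>_def \<gamma>_def)
qed

lemma fin:
  fixes C V N a2 b2 P Q x y t q :: real
  assumes "C > 0" "V > 0" "q > 0" "x \<ge> 0" "y \<ge> 0"
   "V*b2 + C*P \<le> C*V*N" "V*Q + C*a2 \<le> C*V*N" "x^2 \<le> Q*C" "y^2 \<le> P*V" "t \<ge> - (x*y)"
  shows "C*a2 + q^2*(V*b2) - 2*q*t \<le> (1+q^2)*(C*V)*N"
proof -
  have e: "(V*x - q*C*y)^2 = V^2*x^2 - 2*q*x*y*(C*V) + q^2*C^2*y^2"
    by (simp add: power2_diff power_mult_distrib algebra_simps)
  have "2*q*x*y*(C*V) \<le> V^2*x^2 + q^2*C^2*y^2"
    using e zero_le_power2[of "V*x - q*C*y"] by linarith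
  also have "\<dots> \<le> V^2*(Q*C) + q^2*C^2*(P*V)"
    using assms by (intro add_mono mult_left_mono) auto
  also have "\<dots> = (C*V)*(V*Q + q^2*C*P)" by (simp add: algebra_simps power2_eq_square)
  finally have h: "(C*V)*(2*q*x*y) \<le> (C*V)*(V*Q + q^2*C*P)" by (simp add: algebra_simps)
  have cv: "C*V > 0" using assms by simp
  have h2: "2*q*x*y \<le> V*Q + q^2*C*P"
    using mult_le_cancel_left_pos[OF cv] h by blast
  have h3: "q^2*(V*b2) \<le> q^2*(C*V*N - C*P)"
    using assms by (intro mult_left_mono) auto
  have h5: "q*(-(x*y)) \<le> q*t" using assms(10,3) by (intro mult_left_mono) auto
  have h4: "-2*q*t \<le> 2*q*(x*y)" using h5 by simp
  have "(1+q^2)*(C*V)*N = C*V*N + q^2*(C*V*N)" by (simp add: algebra_simps)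
  thus ?thesis using h2 h3 h4 assms(7) by (simp add: algebra_simps)
qed

lemma rank1_decomp:
  fixes A :: "complex^'n^'m"
  assumes "rank A = 1"
  obtains c v where "\<And>i j. A$i$j = c i * v $ j" "A \<noteq> 0"
proof -
  have d: "vec.dim (rows A) = 1" using assms by (simp add: row_rank_def_gen)
  obtain Bs where Bs: "Bs \<subseteq> rows A" "vec.independent Bs" "rows A \<subseteq> vec.span Bs" "card Bs = 1"
    using vec.basis_exists[of "rows A"] d by metis
  then obtain v where v: "Bs = {v}" using card_1_singletonE by blast
  have "\<forall>i. \<exists>k. row i A = k *s v"
  proof
    fix i
    have "row i A \<in> rows A" by (auto simp: rows_def)
    then have "row i A \<in> range (\<lambda>k. k *s v)" using Bs(3) v vec.span_singleton[of v] by auto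
    then show "\<exists>k. row i A = k *s v" by auto
  qed
  then obtain c where c: "\<And>i. row i A = c i *s v" by metis
  have e: "\<And>i j. A$i$j = c i * v $ j"
    by (metis c row_def vec_lambda_eta vector_smult_component)
  have "A \<noteq> 0"
  proof
    assume "A = 0"
    hence "rows A \<subseteq> {0}" by (auto simp: rows_def row_def zero_vec_def)
    hence "vec.dim (rows A) = 0"
      by (metis vec.dim_empty vec.dim_insert vec.span_empty vec.span_zero subset_singletonD)
    thus False using d by simp
  qed
  show ?thesis using e \<open>A \<noteq> 0\<close> that by blast
qed

lemma cs_raw:
  fixes f g :: "'n::finite \<Rightarrow> complex"
  shows "nr g * (nr g * nr f - (cmod (ip f g))^2) \<ge> 0"
proof -
  define G where "G = nr g"
  define F where "F = nr f"
  define \<beta> where "\<beta> = ip f g"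
  define z where "z = (\<lambda>j. complex_of_real G * f j - \<beta> * g j)"
  have hb: "\<And>x. \<beta> * (cnj \<beta> * x) = of_real (cmod \<beta>) * (of_real (cmod \<beta>) * x)"
    by (metis complex_norm_square mult.assoc of_real_mult power2_eq_square)
  have gf: "ip g f = cnj \<beta>" by (simp add: \<beta>_def ip_conj[of g f])
  have "ip z z = of_real G * of_real G * ip f f - of_real G * cnj \<beta> * ip f g
     - \<beta> * of_real G * ip g f + \<beta> * cnj \<beta> * ip g g"
    unfolding z_def ip_diff_left ip_diff_right ip_scale_left ip_scale_right
    by (simp add: algebra_simps del: of_real_mult)
  also have "\<dots> = of_real (G*(G*F - (cmod \<beta>)^2))"
    using gf
    by (simp add: hb ip_nr G_def[symmetric] F_def[symmetric] \<beta>_def[symmetric]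
       algebra_simps power2_eq_square)
  finally have "of_real (nr z) = (of_real (G*(G*F - (cmod \<beta>)^2)) :: complex)"
    by (simp add: ip_nr)
  hence "nr z = G*(G*F - (cmod \<beta>)^2)" using of_real_eq_iff by blast
  thus ?thesis using nr_nonneg[of z] by (simp add: G_def F_def \<beta>_def)
qed

lemma nr_zero: "nr (g::'n::finite \<Rightarrow> complex) = 0 \<Longrightarrow> g j = 0"
  using ip_self_zero[of g] by (simp add: nr_def)

lemma cs:
  fixes f g :: "'n::finite \<Rightarrow> complex"
  shows "(cmod (ip f g))^2 \<le> nr f * nr g"
proof (cases "nr g = 0")
  case True
  hence "ip f g = 0" by (simp add: ip_def nr_zero)
  thus ?thesis by (simp add: nr_nonneg)
next
  case False
  hence "nr g > 0" using nr_nonneg[of g] by simp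
  thus ?thesis using cs_raw[of g f] by (simp add: zero_le_mult_iff mult.commute)
qed

lemma bessel:
  fixes r u w :: "'n::finite \<Rightarrow> complex"
  assumes "ip u w = 0" "nr u > 0" "nr w > 0"
  shows "nr w * (cmod (ip r u))^2 + nr u * (cmod (ip r w))^2 \<le> nr u * nr w * nr r"
proof -
  have "nr u * nr w > 0" using assms by simp
  thus ?thesis using bessel_raw[OF assms(1), of r] by (simp add: zero_le_mult_iff)
qed

lemma lhs_expand:
  fixes x y f g :: "'n::finite \<Rightarrow> complex" and q :: real
  shows "(\<Sum>i\<in>UNIV. nr (\<lambda>j. x i * f j - of_real q * y i * g j))
     = nr x * nr f - 2*q*Re(ip x y * ip f g) + q^2 * nr y * nr g"
proof -
  have row: "\<And>i. ip (\<lambda>j. x i * f j - (of_real q * y i) * g j) (\<lambda>j. x i * f j - (of_real q * y i) * g j)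
     = x i * cnj (x i) * ip f f - x i * cnj (of_real q * y i) * ip f g
       - of_real q * y i * cnj (x i) * ip g f + of_real q * y i * cnj (of_real q * y i) * ip g g"
    unfolding ip_diff_left ip_diff_right ip_scale_left ip_scale_right
    by (simp add: algebra_simps)
  have "complex_of_real (\<Sum>i\<in>UNIV. nr (\<lambda>j. x i * f j - of_real q * y i * g j))
      = (\<Sum>i\<in>UNIV. ip (\<lambda>j. x i * f j - (of_real q * y i) * g j) (\<lambda>j. x i * f j - (of_real q * y i) * g j))"
    by (simp add: ip_nr of_real_sum mult.assoc)
  also have "\<dots> = ip x x * ip f f - of_real q * ip x y * ip f g - of_real q * ip y x * ip g f
      + of_real q * of_real q * ip y y * ip g g"
    unfolding row
    by (simp add: sum_subtractf sum.distrib ip_def sum_distrib_left sum_distrib_right algebra_simps)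
  also have "\<dots> = of_real (nr x * nr f + q^2 * nr y * nr g) - of_real q * (ip x y * ip f g + cnj (ip x y * ip f g))"
    by (simp add: ip_nr ip_conj[of y x] ip_conj[of g f] algebra_simps power2_eq_square)
  also have "\<dots> = of_real (nr x * nr f - 2*q*Re(ip x y * ip f g) + q^2 * nr y * nr g)"
    unfolding complex_add_cnj by (simp add: algebra_simps)
  finally show ?thesis using of_real_eq_iff by blast
qed

theorem mainTheorem8:
  fixes A B :: "complex^'n^'n" and q :: real
  assumes "CARD('n) \<ge> 2"
    and "q > 0"
    and "trace A = 0"
    and "rank A = 1"
  shows "(frob_norm (A ** B - q *\<^sub>R (B ** A)))\<^sup>2
           \<le> (1 + q\<^sup>2) * (frob_norm A)\<^sup>2 * (frob_norm B)\<^sup>2"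
proof -
  obtain c v0 where cv: "\<And>i j. A$i$j = c i * v0 $ j" and A0: "A \<noteq> 0"
    using rank1_decomp[OF assms(4)] by blast
  define v where "v = (\<lambda>j. v0 $ j)"
  define w where "w = (\<lambda>j. cnj (v j))"
  define cc where "cc = (\<lambda>j. cnj (c j))"
  define r where "r = (\<lambda>i j. B$i$j)"
  define s where "s = (\<lambda>j i. B$i$j)"
  define a where "a = (\<lambda>j. ip (s j) w)"
  define b where "b = (\<lambda>i. ip (r i) cc)"
  define p where "p = (\<lambda>i. ip (r i) v)"
  define d where "d = (\<lambda>j. ip (s j) c)"
  define C where "C = nr c"
  define V where "V = nr v"
  define N where "N = (\<Sum>i\<in>UNIV. nr (r i))"
  have A': "\<And>i j. A$i$j = c i * v j" using cv by (simp add: v_def)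
  have tr: "(\<Sum>i\<in>UNIV. c i * v i) = 0" using assms(3) by (simp add: trace_def A')
  have o1: "ip c w = 0" using tr by (simp add: ip_def w_def)
  have o2: "ip cc v = 0"
  proof -
    have "ip cc v = cnj (\<Sum>i\<in>UNIV. c i * v i)" by (simp add: ip_def cc_def)
    thus ?thesis using tr by simp
  qed
  have Ccc: "nr cc = C" by (simp add: nr_def cc_def C_def)
  have Vw: "nr w = V" by (simp add: nr_def w_def V_def)
  obtain i0 j0 where ij: "A$i0$j0 \<noteq> 0" using A0
    by (metis vec_eq_iff zero_index)
  have ci: "c i0 \<noteq> 0" and vj: "v j0 \<noteq> 0" using ij A' by auto
  have Cpos: "C > 0"
  proof -
    have "(cmod (c i0))^2 \<le> C" unfolding C_def nr_def
      by (rule member_le_sum) auto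
    moreover have "(cmod (c i0))^2 > 0" using ci by simp
    ultimately show ?thesis by linarith
  qed
  have Vpos: "V > 0"
  proof -
    have "(cmod (v j0))^2 \<le> V" unfolding V_def nr_def
      by (rule member_le_sum) auto
    moreover have "(cmod (v j0))^2 > 0" using vj by simp
    ultimately show ?thesis by linarith
  qed
  have fA: "(frob_norm A)^2 = C * V"
    by (simp add: frob_sq A' norm_mult power_mult_distrib C_def V_def nr_def sum_product)
  have fB: "(frob_norm B)^2 = N"
    by (simp add: frob_sq N_def nr_def r_def)
  have N2: "N = (\<Sum>j\<in>UNIV. nr (s j))"
    unfolding N_def nr_def r_def s_def by (rule sum.swap)
  have M: "\<And>i j. (A ** B - q *\<^sub>R (B ** A))$i$j = c i * a j - of_real q * b i * v j"
    unfolding vector_minus_component vector_scaleR_component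
    by (simp add: matrix_matrix_mult_def A' a_def b_def ip_def s_def r_def w_def cc_def
       sum_distrib_left sum_distrib_right scaleR_conv_of_real algebra_simps)
  have fM: "(frob_norm (A ** B - q *\<^sub>R (B ** A)))^2
      = (\<Sum>i\<in>UNIV. nr (\<lambda>j. c i * a j - of_real q * b i * v j))"
    unfolding frob_sq M by (simp add: nr_def)
  also have "\<dots> = C * nr a - 2*q*Re(ip c b * ip a v) + q^2 * nr b * V"
    by (simp add: lhs_expand C_def V_def)
  finally have L: "(frob_norm (A ** B - q *\<^sub>R (B ** A)))^2 = C * nr a - 2*q*Re(ip c b * ip a v) + q^2 * nr b * V" .
  have b1: "V * nr b + C * nr p \<le> C * V * N"
  proof -
    have "\<And>i. V * (cmod (b i))^2 + C * (cmod (p i))^2 \<le> C * V * nr (r i)"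
      using bessel[OF o2, of "r _"] Cpos Vpos Ccc by (simp add: b_def p_def V_def)
    hence "(\<Sum>i\<in>UNIV. V * (cmod (b i))^2 + C * (cmod (p i))^2) \<le> (\<Sum>i\<in>UNIV. C * V * nr (r i))"
      by (rule sum_mono)
    thus ?thesis by (simp add: sum.distrib sum_distrib_left nr_def N_def)
  qed
  have b2: "V * nr d + C * nr a \<le> C * V * N"
  proof -
    have "\<And>j. V * (cmod (d j))^2 + C * (cmod (a j))^2 \<le> C * V * nr (s j)"
      using bessel[OF o1, of "s _"] Cpos Vpos Vw by (simp add: a_def d_def C_def)
    hence "(\<Sum>j\<in>UNIV. V * (cmod (d j))^2 + C * (cmod (a j))^2) \<le> (\<Sum>j\<in>UNIV. C * V * nr (s j))"
      by (rule sum_mono)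
    thus ?thesis by (simp add: sum.distrib sum_distrib_left nr_def N2)
  qed
  have e1: "ip a v = ip p w"
  proof -
    have "ip a v = (\<Sum>j\<in>UNIV. \<Sum>i\<in>UNIV. v i * B$i$j * cnj (v j))"
      by (simp add: ip_def a_def s_def w_def sum_distrib_right sum_distrib_left mult_ac)
    also have "\<dots> = (\<Sum>i\<in>UNIV. \<Sum>j\<in>UNIV. v i * B$i$j * cnj (v j))" by (rule sum.swap)
    also have "\<dots> = ip p w" by (simp add: ip_def p_def r_def w_def sum_distrib_left sum_distrib_right mult_ac)
    finally show ?thesis .
  qed
  have e2: "ip c b = cnj (ip d cc)"
  proof -
    have "ip c b = (\<Sum>i\<in>UNIV. \<Sum>k\<in>UNIV. c i * cnj (B$i$k) * cnj (c k))"
      by (simp add: ip_def b_def r_def cc_def sum_distrib_left mult_ac)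
    also have "\<dots> = (\<Sum>k\<in>UNIV. \<Sum>i\<in>UNIV. c i * cnj (B$i$k) * cnj (c k))" by (rule sum.swap)
    also have "\<dots> = cnj (ip d cc)"
      by (simp add: ip_def d_def s_def cc_def sum_distrib_right sum_distrib_left mult_ac)
    finally show ?thesis .
  qed
  have cs1: "(cmod (ip c b))^2 \<le> nr d * C" using cs[of d cc] e2 Ccc by simp
  have cs2: "(cmod (ip a v))^2 \<le> nr p * V" using cs[of p w] e1 Vw by simp
  have t: "Re (ip c b * ip a v) \<ge> - (cmod (ip c b) * cmod (ip a v))"
    using abs_Re_le_cmod[of "ip c b * ip a v"] by (simp add: norm_mult)
  have "C * nr a + q^2 * (V * nr b) - 2*q*Re(ip c b * ip a v) \<le> (1+q^2)*(C*V)*N"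
    by (rule fin[OF Cpos Vpos assms(2) norm_ge_zero norm_ge_zero b1 b2 cs1 cs2 t])
  thus ?thesis unfolding L fA fB by (simp add: algebra_simps)
qed

end
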